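(* Let \[ g=\begin{pmatrix}A&C\\0&B\end{pmatrix}\in\mathrm{GL}_{n+m}(L), \] where $A\in\mathrm{GL}_n(L)$ and $B\in\mathrm{GL}_m(L)$ are monomial matrices in the sense that each row of $A$ and each column of $B$ contains exactly one nonzero entry. For $1\le i\le n$ let $\alpha_i$ be the valuation of the unique nonzero entry in row $i$ of $A$, and for $1\le j\le m$ let $\beta_j$ be the valuation of the unique nonzero entry in column $j$ of $B$. Order the combined list $\{\alpha_1,\dots,\alpha_n,\beta_1,\dots,\beta_m\}$ as $\gamma_1\le\gamma_2\le\cdots\le\gamma_{n+m}$. Then \[ g\in K\,\mathrm{diag}(t^{\gamma_1},\dots,t^{\gamma_{n+m}})\,K \] if and only if every entry $c_{ij}$ of the block $C$ satisfies $v(c_{ij})\ge\min\{\alpha_i,\beta_j\}$.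
   Context: $F$ is a non-Archimedean local field with uniformizer $t$; $L$ is the completion of the maximal unramified extension of $F$, with ring of integers $\mathcal O_L$ and normalized valuation $v$ ($v(t)=1$). $K=\mathrm{GL}_{n+m}(\mathcal O_L)$. *)

theory Defs
  imports "Jordan_Normal_Form.Matrix"
begin

text \<open>A normalized discrete valuation v on a field, with uniformizer t (v t = 1).
  The value v 0 is irrelevant (0 has valuation +infinity); all axioms only
  concern nonzero elements.\<close>
definition normalized_dval :: "('a::field \<Rightarrow> int) \<Rightarrow> 'a \<Rightarrow> bool" where
  "normalized_dval v t \<longleftrightarrow> t \<noteq> 0 \<and> v t = 1 \<and>
     (\<forall>x y. x \<noteq> 0 \<and> y \<noteq> 0 \<longrightarrow> v (x * y) = v x + v y) \<and>
     (\<forall>x y. x \<noteq> 0 \<and> y \<noteq> 0 \<and> x + y \<noteq> 0 \<longrightarrow> v (x + y) \<ge> min (v x) (v y))"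

definition integral :: "('a::field \<Rightarrow> int) \<Rightarrow> 'a \<Rightarrow> bool" where
  "integral v x \<longleftrightarrow> x = 0 \<or> v x \<ge> 0"

definition integral_mat :: "('a::field \<Rightarrow> int) \<Rightarrow> 'a mat \<Rightarrow> bool" where
  "integral_mat v M \<longleftrightarrow> (\<forall>i < dim_row M. \<forall>j < dim_col M. integral v (M $$ (i, j)))"

definition GL_int :: "('a::field \<Rightarrow> int) \<Rightarrow> nat \<Rightarrow> 'a mat set" where
  "GL_int v N = {k. k \<in> carrier_mat N N \<and> integral_mat v k \<and>
      (\<exists>k'. k' \<in> carrier_mat N N \<and> integral_mat v k' \<and> k * k' = 1\<^sub>m N \<and> k' * k = 1\<^sub>m N)}"

definition diag_pow :: "'a::field \<Rightarrow> int list \<Rightarrow> 'a mat" where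
  "diag_pow t gs = mat (length gs) (length gs) (\<lambda>(i, j). if i = j then t powi (gs ! i) else 0)"

definition row_monomial :: "'a::zero mat \<Rightarrow> bool" where
  "row_monomial A \<longleftrightarrow> (\<forall>i < dim_row A. \<exists>!j. j < dim_col A \<and> A $$ (i, j) \<noteq> 0)"

definition col_monomial :: "'a::zero mat \<Rightarrow> bool" where
  "col_monomial B \<longleftrightarrow> (\<forall>j < dim_col B. \<exists>!i. i < dim_row B \<and> B $$ (i, j) \<noteq> 0)"

definition row_entry :: "'a::zero mat \<Rightarrow> nat \<Rightarrow> 'a" where
  "row_entry A i = A $$ (i, THE j. j < dim_col A \<and> A $$ (i, j) \<noteq> 0)"

definition col_entry :: "'a::zero mat \<Rightarrow> nat \<Rightarrow> 'a" where
  "col_entry B j = B $$ (THE i. i < dim_row B \<and> B $$ (i, j) \<noteq> 0, j)"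

end

theory Submission
  imports Defs "Jordan_Normal_Form.Determinant" "HOL-Combinatorics.Permutations"
begin

context
  fixes v :: "'a::field \<Rightarrow> int" and t :: 'a
  assumes val: "normalized_dval v t"
begin

lemma vmult: "x \<noteq> 0 \<Longrightarrow> y \<noteq> 0 \<Longrightarrow> v (x * y) = v x + v y"
  using val unfolding normalized_dval_def by blast

lemma vadd: "x \<noteq> 0 \<Longrightarrow> y \<noteq> 0 \<Longrightarrow> x + y \<noteq> 0 \<Longrightarrow> v (x + y) \<ge> min (v x) (v y)"
  using val unfolding normalized_dval_def by blast

lemma t_nz: "t \<noteq> 0" and vt: "v t = 1"
  using val unfolding normalized_dval_def by auto

lemma v1: "v 1 = 0"
  using vmult[of 1 1] by simp

lemma vinv: "x \<noteq> 0 \<Longrightarrow> v (inverse x) = - v x"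
  using vmult[of x "inverse x"] v1 by simp

lemma vdiv: "x \<noteq> 0 \<Longrightarrow> y \<noteq> 0 \<Longrightarrow> v (x / y) = v x - v y"
  by (simp add: divide_inverse vmult vinv)

lemma vneg1: "v (-1) = 0"
  using vmult[of "-1" "-1"] v1 by simp

lemma vneg: "v (- x) = v x"
proof (cases "x = 0")
  case False thus ?thesis using vmult[of "-1" x] vneg1 by simp
qed simp

lemma vpowi: "v (t powi k) = k"
proof (cases "k \<ge> 0")
  case True
  have "v (t ^ n) = int n" for n
    by (induction n) (auto simp: v1 vmult t_nz vt)
  then show ?thesis using True by (simp add: power_int_def)
next
  case False
  have "v (t ^ n) = int n" for n
    by (induction n) (auto simp: v1 vmult t_nz vt)
  moreover have "inverse t ^ nat (- k) = inverse (t ^ nat (- k))" by (rule power_inverse)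
  ultimately show ?thesis using False t_nz by (simp add: power_int_def vinv)
qed

lemma vsum: assumes "finite S" "\<And>s. s \<in> S \<Longrightarrow> f s \<noteq> 0 \<Longrightarrow> b \<le> v (f s)" "sum f S \<noteq> 0"
  shows "b \<le> v (sum f S)"
  using assms
proof (induction S rule: finite_induct)
  case (insert x F)
  show ?case
  proof (cases "f x = 0")
    case True thus ?thesis using insert by auto
  next
    case fx: False
    show ?thesis
    proof (cases "sum f F = 0")
      case True thus ?thesis using insert fx by auto
    next
      case False
      have "b \<le> v (sum f F)" using insert False by auto
      moreover have "b \<le> v (f x)" using insert fx by auto
      ultimately show ?thesis using vadd[OF fx False] insert by force
    qed
  qed
qed simp

lemma vprod: assumes "finite S" "\<And>s. s \<in> S \<Longrightarrow> f s \<noteq> 0"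
  shows "prod f S \<noteq> 0 \<and> v (prod f S) = (\<Sum>s\<in>S. v (f s))"
  using assms by (induction S rule: finite_induct) (auto simp: v1 vmult)

lemma integral_mult: "integral v x \<Longrightarrow> integral v y \<Longrightarrow> integral v (x * y)"
  unfolding integral_def by (cases "x = 0"; cases "y = 0") (auto simp: vmult)

lemma integral_add: "integral v x \<Longrightarrow> integral v y \<Longrightarrow> integral v (x + y)"
  unfolding integral_def using vadd[of x y] by force

lemma integral_sum: "finite S \<Longrightarrow> (\<And>s. s \<in> S \<Longrightarrow> integral v (f s)) \<Longrightarrow> integral v (sum f S)"
  by (induction S rule: finite_induct) (auto simp: integral_def[of v 0] intro: integral_add)

lemma integral_0: "integral v 0" and integral_1: "integral v 1"
  by (auto simp: integral_def v1)

lemma integral_neg: "integral v x \<Longrightarrow> integral v (- x)"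
  by (auto simp: integral_def vneg)

lemma integral_mat_mult: assumes "A \<in> carrier_mat n k" "B \<in> carrier_mat k l"
  "integral_mat v A" "integral_mat v B" shows "integral_mat v (A * B)"
  using assms unfolding integral_mat_def
  by (auto simp: scalar_prod_def intro!: integral_sum integral_mult)

end

definition pmat :: "nat \<Rightarrow> (nat \<Rightarrow> nat) \<Rightarrow> 'a::field mat" where
  "pmat N f = mat N N (\<lambda>(r,c). if c = f r then 1 else 0)"

definition dmat :: "nat \<Rightarrow> (nat \<Rightarrow> 'a) \<Rightarrow> 'a::field mat" where
  "dmat N d = mat N N (\<lambda>(r,c). if r = c then d r else 0)"

lemma pmat_carrier[simp]: "pmat N f \<in> carrier_mat N N" and dmat_carrier[simp]: "dmat N d \<in> carrier_mat N N"
  by (auto simp: pmat_def dmat_def)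

lemma pmat_dims[simp]: "dim_row (pmat N f) = N" "dim_col (pmat N f) = N"
  "dim_row (dmat N d) = N" "dim_col (dmat N d) = N"
  by (auto simp: pmat_def dmat_def)

lemma mult_entry: assumes "A \<in> carrier_mat n k" "B \<in> carrier_mat k l" "r < n" "c < l"
  shows "(A * B) $$ (r, c) = (\<Sum>i<k. A $$ (r, i) * B $$ (i, c))"
  using assms by (simp add: scalar_prod_def atLeast0LessThan)

lemma pmat_left: assumes "\<forall>x<N. f x < N" "X \<in> carrier_mat N k" "r < N" "c < k"
  shows "(pmat N f * X) $$ (r, c) = X $$ (f r, c)"
proof -
  have "(pmat N f * X) $$ (r, c) = (\<Sum>i<N. (if i = f r then X $$ (i, c) else 0))"
    unfolding mult_entry[OF pmat_carrier assms(2-4)] using assms by (intro sum.cong) (auto simp: pmat_def)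
  also have "\<dots> = X $$ (f r, c)" using assms by (simp add: sum.delta')
  finally show ?thesis .
qed

lemma pmat_right: assumes "\<forall>x<N. f x < N \<and> h x < N \<and> h (f x) = x \<and> f (h x) = x"
  "X \<in> carrier_mat k N" "r < k" "c < N"
  shows "(X * pmat N f) $$ (r, c) = X $$ (r, h c)"
proof -
  have "(X * pmat N f) $$ (r, c) = (\<Sum>i<N. (if i = h c then X $$ (r, i) else 0))"
    unfolding mult_entry[OF assms(2) pmat_carrier assms(3-4)] using assms by (intro sum.cong) (auto simp: pmat_def)
  also have "\<dots> = X $$ (r, h c)" using assms by (simp add: sum.delta')
  finally show ?thesis .
qed

lemma dmat_left: assumes "X \<in> carrier_mat N k" "r < N" "c < k"
  shows "(dmat N d * X) $$ (r, c) = d r * X $$ (r, c)"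
proof -
  have "(dmat N d * X) $$ (r, c) = (\<Sum>i<N. (if i = r then d r * X $$ (i, c) else 0))"
    unfolding mult_entry[OF dmat_carrier assms(1-3)] using assms by (intro sum.cong) (auto simp: dmat_def)
  also have "\<dots> = d r * X $$ (r, c)" using assms by (simp add: sum.delta')
  finally show ?thesis .
qed

lemma dmat_right: assumes "X \<in> carrier_mat k N" "r < k" "c < N"
  shows "(X * dmat N d) $$ (r, c) = X $$ (r, c) * d c"
proof -
  have "(X * dmat N d) $$ (r, c) = (\<Sum>i<N. (if i = c then X $$ (r, i) * d c else 0))"
    unfolding mult_entry[OF assms(1) dmat_carrier assms(2-3)] using assms by (intro sum.cong) (auto simp: dmat_def)
  also have "\<dots> = X $$ (r, c) * d c" using assms by (simp add: sum.delta')
  finally show ?thesis .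
qed

context
  fixes v :: "'a::field \<Rightarrow> int" and t :: 'a
  assumes val: "normalized_dval v t"
begin

lemma GL_intI: "k \<in> carrier_mat N N \<Longrightarrow> k' \<in> carrier_mat N N \<Longrightarrow> integral_mat v k \<Longrightarrow> integral_mat v k'
  \<Longrightarrow> k * k' = 1\<^sub>m N \<Longrightarrow> k' * k = 1\<^sub>m N \<Longrightarrow> k \<in> GL_int v N"
  unfolding GL_int_def by blast

lemma GL_carrier: "k \<in> GL_int v N \<Longrightarrow> k \<in> carrier_mat N N"
  unfolding GL_int_def by blast

lemma GL_integral: "k \<in> GL_int v N \<Longrightarrow> integral_mat v k"
  unfolding GL_int_def by blast

lemma GL_inv: assumes "k \<in> GL_int v N" obtains k' where "k' \<in> GL_int v N" "k * k' = 1\<^sub>m N" "k' * k = 1\<^sub>m N"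
  using assms unfolding GL_int_def by blast

lemma GL_mult: assumes "k1 \<in> GL_int v N" "k2 \<in> GL_int v N" shows "k1 * k2 \<in> GL_int v N"
proof -
  obtain k1' where 1: "k1' \<in> GL_int v N" "k1 * k1' = 1\<^sub>m N" "k1' * k1 = 1\<^sub>m N" using GL_inv[OF assms(1)] .
  obtain k2' where 2: "k2' \<in> GL_int v N" "k2 * k2' = 1\<^sub>m N" "k2' * k2 = 1\<^sub>m N" using GL_inv[OF assms(2)] .
  note c = GL_carrier[OF assms(1)] GL_carrier[OF assms(2)] GL_carrier[OF 1(1)] GL_carrier[OF 2(1)]
  have "k1 * k2 * (k2' * k1') = k1 * (k2 * k2') * k1'"
    using c by (simp add: assoc_mult_mat[of _ N N _ N _ N])
  also have "\<dots> = 1\<^sub>m N" using c 1 2 by simp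
  finally have e1: "k1 * k2 * (k2' * k1') = 1\<^sub>m N" .
  have "k2' * k1' * (k1 * k2) = k2' * (k1' * k1) * k2"
    using c by (simp add: assoc_mult_mat[of _ N N _ N _ N])
  also have "\<dots> = 1\<^sub>m N" using c 1 2 by simp
  finally have e2: "k2' * k1' * (k1 * k2) = 1\<^sub>m N" .
  have i: "integral_mat v k1" "integral_mat v k2" "integral_mat v k1'" "integral_mat v k2'"
    using GL_integral assms 1 2 by auto
  show ?thesis
    apply (rule GL_intI[OF _ _ _ _ e1 e2])
    using c i by (auto intro: integral_mat_mult[OF val])
qed

lemma pmat_integral: "integral_mat v (pmat N f)"
  unfolding integral_mat_def pmat_def using integral_0 integral_1 val by auto

lemma pmat_GL: assumes "\<forall>x<N. f x < N \<and> h x < N \<and> h (f x) = x \<and> f (h x) = x"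
  shows "pmat N f \<in> GL_int v N"
proof (rule GL_intI[of _ _ "pmat N h"])
  show "pmat N f * pmat N h = 1\<^sub>m N"
  proof (rule eq_matI)
    fix r c assume rc: "r < dim_row (1\<^sub>m N)" "c < dim_col (1\<^sub>m N)"
    have "f r < N" "h (f r) = r" using assms rc by auto
    have "(pmat N f * pmat N h) $$ (r, c) = pmat N h $$ (f r, c)"
      by (rule pmat_left) (use assms rc in auto)
    also have "\<dots> = 1\<^sub>m N $$ (r, c)" using \<open>f r < N\<close> \<open>h (f r) = r\<close> rc by (auto simp: pmat_def)
    finally show "(pmat N f * pmat N h) $$ (r, c) = 1\<^sub>m N $$ (r, c)" .
  qed auto
  show "pmat N h * pmat N f = 1\<^sub>m N"
  proof (rule eq_matI)
    fix r c assume rc: "r < dim_row (1\<^sub>m N)" "c < dim_col (1\<^sub>m N)"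
    have "h r < N" "f (h r) = r" using assms rc by auto
    have "(pmat N h * pmat N f) $$ (r, c) = pmat N f $$ (h r, c)"
      by (rule pmat_left) (use assms rc in auto)
    also have "\<dots> = 1\<^sub>m N $$ (r, c)" using \<open>h r < N\<close> \<open>f (h r) = r\<close> rc by (auto simp: pmat_def)
    finally show "(pmat N h * pmat N f) $$ (r, c) = 1\<^sub>m N $$ (r, c)" .
  qed auto
qed (auto simp: pmat_integral)

lemma dmat_GL: assumes "\<forall>l<N. d l \<noteq> 0 \<and> v (d l) = 0"
  shows "dmat N d \<in> GL_int v N"
proof (rule GL_intI[of _ _ "dmat N (\<lambda>l. inverse (d l))"])
  show "dmat N d * dmat N (\<lambda>l. inverse (d l)) = 1\<^sub>m N"
  proof (rule eq_matI)
    fix r c assume rc: "r < dim_row (1\<^sub>m N)" "c < dim_col (1\<^sub>m N)"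
    have "d r \<noteq> 0" using assms rc by auto
    then show "(dmat N d * dmat N (\<lambda>l. inverse (d l))) $$ (r, c) = 1\<^sub>m N $$ (r, c)"
      unfolding dmat_left[of "dmat N (\<lambda>l. inverse (d l))" N N r c d, OF dmat_carrier rc[simplified]]
      using rc by (auto simp: dmat_def)
  qed auto
  show "dmat N (\<lambda>l. inverse (d l)) * dmat N d = 1\<^sub>m N"
  proof (rule eq_matI)
    fix r c assume rc: "r < dim_row (1\<^sub>m N)" "c < dim_col (1\<^sub>m N)"
    have "d r \<noteq> 0" using assms rc by auto
    then show "(dmat N (\<lambda>l. inverse (d l)) * dmat N d) $$ (r, c) = 1\<^sub>m N $$ (r, c)"
      unfolding dmat_left[of "dmat N d" N N r c "\<lambda>l. inverse (d l)", OF dmat_carrier rc[simplified]]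
      using rc by (auto simp: dmat_def)
  qed auto
  show "integral_mat v (dmat N d)" using assms
    unfolding integral_mat_def dmat_def by (auto simp: integral_def)
  show "integral_mat v (dmat N (\<lambda>l. inverse (d l)))" using assms
    unfolding integral_mat_def dmat_def by (auto simp: integral_def vinv[OF val])
qed auto

lemma v_signof: "v (signof p) = 0"
  by (auto simp: sign_def v1[OF val] vneg1[OF val])

lemma det_bound:
  assumes M: "M \<in> carrier_mat N N" and R: "R \<subseteq> {..<N}"
    and rowR: "\<And>r l. r \<in> R \<Longrightarrow> l < N \<Longrightarrow> M $$ (r, l) \<noteq> 0 \<Longrightarrow> w l \<le> v (M $$ (r, l))"
    and rowO: "\<And>r l. r < N \<Longrightarrow> r \<notin> R \<Longrightarrow> l < N \<Longrightarrow> integral v (M $$ (r, l))"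
    and Tb: "\<And>T. T \<subseteq> {..<N} \<Longrightarrow> card T = card R \<Longrightarrow> b \<le> (\<Sum>l\<in>T. w l)"
    and nz: "det M \<noteq> 0"
  shows "b \<le> v (det M)"
proof -
  have d: "det M = (\<Sum>p\<in>{p. p permutes {..<N}}. signof p * (\<Prod>i\<in>{..<N}. M $$ (i, p i)))"
    using det_def'[OF M] by (simp add: atLeast0LessThan)
  show ?thesis unfolding d
  proof (rule vsum[OF val])
    show "finite {p. p permutes {..<N}}" by (simp add: finite_permutations)
    show "(\<Sum>p\<in>{p. p permutes {..<N}}. signof p * (\<Prod>i\<in>{..<N}. M $$ (i, p i))) \<noteq> 0"
      using nz d by simp
    fix p assume p: "p \<in> {p. p permutes {..<N}}"
      and tnz: "(signof p :: 'a) * (\<Prod>i\<in>{..<N}. M $$ (i, p i)) \<noteq> 0"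
    hence pp: "p permutes {..<N}" by simp
    have allnz: "\<And>i. i \<in> {..<N} \<Longrightarrow> M $$ (i, p i) \<noteq> 0" using tnz by auto
    from vprod[OF val, of "{..<N}" "\<lambda>i. M $$ (i, p i)"] allnz
    have pr: "(\<Prod>i\<in>{..<N}. M $$ (i, p i)) \<noteq> 0" "v (\<Prod>i\<in>{..<N}. M $$ (i, p i)) = (\<Sum>i\<in>{..<N}. v (M $$ (i, p i)))"
      by auto
    have sg: "(signof p :: 'a) \<noteq> 0" by (auto simp: sign_def)
    have vt: "v (signof p * (\<Prod>i\<in>{..<N}. M $$ (i, p i))) = (\<Sum>i\<in>{..<N}. v (M $$ (i, p i)))"
      using vmult[OF val sg pr(1)] pr(2) v_signof by simp
    have pin: "\<And>i. i < N \<Longrightarrow> p i < N" using permutes_in_image[OF pp] by auto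
    have s1: "(\<Sum>i\<in>{..<N}. v (M $$ (i, p i))) = (\<Sum>i\<in>R. v (M $$ (i, p i))) + (\<Sum>i\<in>{..<N} - R. v (M $$ (i, p i)))"
      using R by (metis finite_lessThan sum.subset_diff add.commute)
    have s2: "(\<Sum>i\<in>{..<N} - R. v (M $$ (i, p i))) \<ge> 0"
      using rowO allnz pin by (intro sum_nonneg) (auto simp: integral_def)
    have s3: "(\<Sum>i\<in>R. v (M $$ (i, p i))) \<ge> (\<Sum>i\<in>R. w (p i))"
      using rowR allnz pin R by (intro sum_mono) auto
    have s4: "(\<Sum>i\<in>R. w (p i)) = (\<Sum>l\<in>p ` R. w l)"
      using permutes_inj[OF pp] by (simp add: sum.reindex inj_on_def)
    have s5: "b \<le> (\<Sum>l\<in>p ` R. w l)"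
      apply (rule Tb)
      using R pin apply auto[1]
      using permutes_inj[OF pp] by (simp add: card_image inj_on_def)
    show "b \<le> v (signof p * (\<Prod>i\<in>{..<N}. M $$ (i, p i)))" using vt s1 s2 s3 s4 s5 by linarith
  qed
qed

lemma det_integral: assumes "M \<in> carrier_mat N N" "integral_mat v M" shows "integral v (det M)"
proof (cases "det M = 0")
  case False
  have "0 \<le> v (det M)"
    by (rule det_bound[OF assms(1) _ _ _ _ False, of "{}" "\<lambda>_. 0"]) (use assms in \<open>auto simp: integral_mat_def\<close>)
  thus ?thesis by (simp add: integral_def)
qed (simp add: integral_def)

lemma GL_det: assumes "k \<in> GL_int v N" shows "det k \<noteq> 0 \<and> v (det k) = 0"
proof -
  obtain k' where 1: "k' \<in> GL_int v N" "k * k' = 1\<^sub>m N" "k' * k = 1\<^sub>m N" using GL_inv[OF assms] .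
  have "det k * det k' = 1" using det_mult[OF GL_carrier[OF assms] GL_carrier[OF 1(1)]] 1 by simp
  hence nz: "det k \<noteq> 0" "det k' \<noteq> 0" by auto
  have "v (det k) + v (det k') = 0" using vmult[OF val nz] \<open>det k * det k' = 1\<close> v1[OF val] by simp
  moreover have "integral v (det k)" "integral v (det k')"
    using det_integral GL_carrier GL_integral assms 1 by blast+
  ultimately show ?thesis using nz by (auto simp: integral_def)
qed

end

lemma bij_inverse: fixes N :: nat assumes "\<And>x. x < N \<Longrightarrow> f x < N" "\<And>y. y < N \<Longrightarrow> \<exists>x<N. f x = y"
  shows "\<exists>h. \<forall>x<N. f x < N \<and> h x < N \<and> h (f x) = x \<and> f (h x) = x"
proof -
  have sub: "{..<N} \<subseteq> f ` {..<N}" using assms(2) by force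
  have inj: "inj_on f {..<N}" by (rule finite_surj_inj[OF _ sub]) simp
  have img: "f ` {..<N} = {..<N}" using sub assms(1) by auto
  let ?h = "inv_into {..<N} f"
  have "\<forall>x<N. f x < N \<and> ?h x < N \<and> ?h (f x) = x \<and> f (?h x) = x"
  proof (intro allI impI conjI)
    fix x assume x: "x < N"
    show "f x < N" using assms(1) x .
    show "?h x < N" using inv_into_into[of x f "{..<N}"] img x by auto
    show "?h (f x) = x" using inv_into_f_f[OF inj] x by auto
    show "f (?h x) = x" using f_inv_into_f[of x f "{..<N}"] img x by auto
  qed
  thus ?thesis by blast
qed

lemma inv_left_dim: assumes "A \<in> carrier_mat n n" "invertible_mat A"
  obtains B where "B \<in> carrier_mat n n" "B * A = 1\<^sub>m n" "A * B = 1\<^sub>m n"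
proof -
  obtain B where B: "inverts_mat A B" "inverts_mat B A" using assms unfolding invertible_mat_def by blast
  have 1: "A * B = 1\<^sub>m n" using B(1) assms(1) unfolding inverts_mat_def by simp
  have "dim_col B = n" using arg_cong[OF 1, of dim_col] by simp
  moreover have "dim_row B = n" using arg_cong[OF B(2)[unfolded inverts_mat_def], of dim_col] assms(1) by simp
  ultimately have Bc: "B \<in> carrier_mat n n" by auto
  have 2: "B * A = 1\<^sub>m n" using B(2) Bc unfolding inverts_mat_def by simp
  show ?thesis using that Bc 1 2 by blast
qed

lemma row_monomial_perm:
  fixes A :: "'a::field mat"
  assumes A: "A \<in> carrier_mat n n" "invertible_mat A" "row_monomial A"
  defines "\<sigma> \<equiv> \<lambda>i. THE j. j < dim_col A \<and> A $$ (i, j) \<noteq> 0"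
  shows "\<And>i. i < n \<Longrightarrow> \<sigma> i < n \<and> A $$ (i, \<sigma> i) \<noteq> 0"
    and "\<And>i j. i < n \<Longrightarrow> j < n \<Longrightarrow> A $$ (i, j) \<noteq> 0 \<Longrightarrow> j = \<sigma> i"
    and "\<And>j. j < n \<Longrightarrow> \<exists>i<n. \<sigma> i = j"
proof -
  have ex: "\<And>i. i < n \<Longrightarrow> \<exists>!j. j < n \<and> A $$ (i, j) \<noteq> 0"
    using A(1,3) unfolding row_monomial_def by auto
  show 1: "\<And>i. i < n \<Longrightarrow> \<sigma> i < n \<and> A $$ (i, \<sigma> i) \<noteq> 0"
    unfolding \<sigma>_def using A(1) theI'[OF ex] by auto
  show 2: "\<And>i j. i < n \<Longrightarrow> j < n \<Longrightarrow> A $$ (i, j) \<noteq> 0 \<Longrightarrow> j = \<sigma> i"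
    using ex 1 by blast
  fix j assume j: "j < n"
  obtain B where B: "B \<in> carrier_mat n n" "B * A = 1\<^sub>m n" using inv_left_dim[OF A(1,2)] by blast
  have "\<exists>i<n. A $$ (i, j) \<noteq> 0"
  proof (rule ccontr)
    assume "\<not> ?thesis"
    hence "(B * A) $$ (j, j) = 0" using mult_entry[OF B(1) A(1) j j] by simp
    thus False using B(2) j by simp
  qed
  then show "\<exists>i<n. \<sigma> i = j" using 2 j by metis
qed

lemma col_monomial_perm:
  fixes B :: "'a::field mat"
  assumes B: "B \<in> carrier_mat m m" "invertible_mat B" "col_monomial B"
  defines "\<tau> \<equiv> \<lambda>j. THE i. i < dim_row B \<and> B $$ (i, j) \<noteq> 0"
  shows "\<And>j. j < m \<Longrightarrow> \<tau> j < m \<and> B $$ (\<tau> j, j) \<noteq> 0"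
    and "\<And>i j. i < m \<Longrightarrow> j < m \<Longrightarrow> B $$ (i, j) \<noteq> 0 \<Longrightarrow> i = \<tau> j"
    and "\<And>i. i < m \<Longrightarrow> \<exists>j<m. \<tau> j = i"
proof -
  have ex: "\<And>j. j < m \<Longrightarrow> \<exists>!i. i < m \<and> B $$ (i, j) \<noteq> 0"
    using B(1,3) unfolding col_monomial_def by auto
  show 1: "\<And>j. j < m \<Longrightarrow> \<tau> j < m \<and> B $$ (\<tau> j, j) \<noteq> 0"
    unfolding \<tau>_def using B(1) theI'[OF ex] by auto
  show 2: "\<And>i j. i < m \<Longrightarrow> j < m \<Longrightarrow> B $$ (i, j) \<noteq> 0 \<Longrightarrow> i = \<tau> j"
    using ex 1 by blast
  fix i assume i: "i < m"
  obtain B' where B': "B' \<in> carrier_mat m m" "B * B' = 1\<^sub>m m" using inv_left_dim[OF B(1,2)] by blast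
  have "\<exists>j<m. B $$ (i, j) \<noteq> 0"
  proof (rule ccontr)
    assume "\<not> ?thesis"
    hence "(B * B') $$ (i, i) = 0" using mult_entry[OF B(1) B'(1) i i] by simp
    thus False using B'(2) i by simp
  qed
  then show "\<exists>j<m. \<tau> j = i" using 2 i by metis
qed

context
  fixes v :: "'a::field \<Rightarrow> int" and t :: 'a
  assumes val: "normalized_dval v t"
begin

lemma KDK_transfer:
  assumes P: "P \<in> GL_int v N" and Q: "Q \<in> GL_int v N" and D: "D \<in> carrier_mat N N"
    and k1: "k1 \<in> GL_int v N" and k2: "k2 \<in> GL_int v N"
  shows "\<exists>k1'\<in>GL_int v N. \<exists>k2'\<in>GL_int v N. P * (k1 * D * k2) * Q = k1' * D * k2'"
proof (intro bexI)
  note c = GL_carrier[OF val P] GL_carrier[OF val Q] GL_carrier[OF val k1] GL_carrier[OF val k2] D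
  show "P * (k1 * D * k2) * Q = (P * k1) * D * (k2 * Q)"
    using c by (simp add: assoc_mult_mat[of _ N N _ N _ N])
  show "P * k1 \<in> GL_int v N" by (rule GL_mult[OF val P k1])
  show "k2 * Q \<in> GL_int v N" by (rule GL_mult[OF val k2 Q])
qed

end

context
  fixes v :: "'a::field \<Rightarrow> int" and t :: 'a
  assumes val: "normalized_dval v t"
begin

lemma KDK_iff:
  assumes P: "P \<in> GL_int v N" and Q: "Q \<in> GL_int v N" and D: "D \<in> carrier_mat N N"
    and g: "g \<in> carrier_mat N N"
  shows "(\<exists>k1\<in>GL_int v N. \<exists>k2\<in>GL_int v N. g = k1 * D * k2) \<longleftrightarrow>
         (\<exists>k1\<in>GL_int v N. \<exists>k2\<in>GL_int v N. P * g * Q = k1 * D * k2)"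
proof
  assume "\<exists>k1\<in>GL_int v N. \<exists>k2\<in>GL_int v N. g = k1 * D * k2"
  then obtain k1 k2 where k: "k1 \<in> GL_int v N" "k2 \<in> GL_int v N" "g = k1 * D * k2" by blast
  show "\<exists>k1\<in>GL_int v N. \<exists>k2\<in>GL_int v N. P * g * Q = k1 * D * k2"
    unfolding k(3) by (rule KDK_transfer[OF val P Q D k(1,2)])
next
  assume "\<exists>k1\<in>GL_int v N. \<exists>k2\<in>GL_int v N. P * g * Q = k1 * D * k2"
  then obtain k1 k2 where k: "k1 \<in> GL_int v N" "k2 \<in> GL_int v N" "P * g * Q = k1 * D * k2" by blast
  obtain P' where P': "P' \<in> GL_int v N" "P * P' = 1\<^sub>m N" "P' * P = 1\<^sub>m N" using GL_inv[OF val P] .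
  obtain Q' where Q': "Q' \<in> GL_int v N" "Q * Q' = 1\<^sub>m N" "Q' * Q = 1\<^sub>m N" using GL_inv[OF val Q] .
  note c = GL_carrier[OF val P] GL_carrier[OF val Q] GL_carrier[OF val P'(1)] GL_carrier[OF val Q'(1)] g
  have "(P' * P) * g * (Q * Q') = g" unfolding P'(3) Q'(2) using g by simp
  moreover have "(P' * P) * g * (Q * Q') = P' * (P * g * Q) * Q'"
    using c by (simp add: assoc_mult_mat[of _ N N _ N _ N])
  ultimately have "g = P' * (k1 * D * k2) * Q'" using k(3) by simp
  thus "\<exists>k1\<in>GL_int v N. \<exists>k2\<in>GL_int v N. g = k1 * D * k2"
    using KDK_transfer[OF val P'(1) Q'(1) D k(1,2)] by simp
qed

lemma g_tilde:
  fixes A C B :: "'a mat" and n m :: nat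
  assumes A: "A \<in> carrier_mat n n" "invertible_mat A" "row_monomial A"
    and B: "B \<in> carrier_mat m m" "invertible_mat B" "col_monomial B"
    and C: "C \<in> carrier_mat n m"
  shows "\<exists>P Q. P \<in> GL_int v (n + m) \<and> Q \<in> GL_int v (n + m) \<and>
     P * four_block_mat A C (0\<^sub>m m n) B * Q =
       four_block_mat (dmat n (row_entry A)) C (0\<^sub>m m n) (dmat m (col_entry B)) \<and>
     (\<forall>i<n. row_entry A i \<noteq> 0) \<and> (\<forall>j<m. col_entry B j \<noteq> 0)"
proof -
  define \<sigma> where "\<sigma> \<equiv> \<lambda>i. THE j. j < dim_col A \<and> A $$ (i, j) \<noteq> 0"
  define \<tau> where "\<tau> \<equiv> \<lambda>j. THE i. i < dim_row B \<and> B $$ (i, j) \<noteq> 0"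
  have s: "\<And>i. i < n \<Longrightarrow> \<sigma> i < n \<and> A $$ (i, \<sigma> i) \<noteq> 0"
    "\<And>i j. i < n \<Longrightarrow> j < n \<Longrightarrow> A $$ (i, j) \<noteq> 0 \<Longrightarrow> j = \<sigma> i"
    "\<And>j. j < n \<Longrightarrow> \<exists>i<n. \<sigma> i = j"
    unfolding \<sigma>_def using row_monomial_perm[OF A] by blast+
  have u: "\<And>j. j < m \<Longrightarrow> \<tau> j < m \<and> B $$ (\<tau> j, j) \<noteq> 0"
    "\<And>i j. i < m \<Longrightarrow> j < m \<Longrightarrow> B $$ (i, j) \<noteq> 0 \<Longrightarrow> i = \<tau> j"
    "\<And>i. i < m \<Longrightarrow> \<exists>j<m. \<tau> j = i"
    unfolding \<tau>_def using col_monomial_perm[OF B] by blast+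
  have re: "row_entry A i = A $$ (i, \<sigma> i)" for i unfolding row_entry_def \<sigma>_def ..
  have ce: "col_entry B j = B $$ (\<tau> j, j)" for j unfolding col_entry_def \<tau>_def ..
  have "\<exists>h. \<forall>x<n. \<sigma> x < n \<and> h x < n \<and> h (\<sigma> x) = x \<and> \<sigma> (h x) = x"
    by (rule bij_inverse[of n \<sigma>, OF conjunct1[OF s(1)] s(3)])
  then obtain \<sigma>' where s': "\<forall>x<n. \<sigma> x < n \<and> \<sigma>' x < n \<and> \<sigma>' (\<sigma> x) = x \<and> \<sigma> (\<sigma>' x) = x"
    by blast
  have "\<exists>h. \<forall>x<m. \<tau> x < m \<and> h x < m \<and> h (\<tau> x) = x \<and> \<tau> (h x) = x"
    by (rule bij_inverse[of m \<tau>, OF conjunct1[OF u(1)] u(3)])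
  then obtain \<tau>' where u': "\<forall>x<m. \<tau> x < m \<and> \<tau>' x < m \<and> \<tau>' (\<tau> x) = x \<and> \<tau> (\<tau>' x) = x"
    by blast
  let ?N = "n + m"
  define fL where "fL = (\<lambda>r. if r < n then r else n + \<tau> (r - n))"
  define hL where "hL = (\<lambda>r. if r < n then r else n + \<tau>' (r - n))"
  define fR where "fR = (\<lambda>r. if r < n then \<sigma>' r else r)"
  define hR where "hR = (\<lambda>r. if r < n then \<sigma> r else r)"
  have L: "\<forall>x<?N. fL x < ?N \<and> hL x < ?N \<and> hL (fL x) = x \<and> fL (hL x) = x"
  proof (intro allI impI)
    fix x assume x: "x < ?N"
    show "fL x < ?N \<and> hL x < ?N \<and> hL (fL x) = x \<and> fL (hL x) = x"
    proof (cases "x < n")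
      case False
      then have x': "x - n < m" using x by auto
      have "\<tau> (x - n) < m \<and> \<tau>' (x - n) < m \<and> \<tau>' (\<tau> (x - n)) = x - n \<and> \<tau> (\<tau>' (x - n)) = x - n"
        using u' x' by blast
      then show ?thesis unfolding fL_def hL_def using False by auto
    qed (auto simp: fL_def hL_def)
  qed
  have R: "\<forall>x<?N. fR x < ?N \<and> hR x < ?N \<and> hR (fR x) = x \<and> fR (hR x) = x"
  proof (intro allI impI)
    fix x assume x: "x < ?N"
    show "fR x < ?N \<and> hR x < ?N \<and> hR (fR x) = x \<and> fR (hR x) = x"
    proof (cases "x < n")
      case True
      have "\<sigma> x < n \<and> \<sigma>' x < n \<and> \<sigma>' (\<sigma> x) = x \<and> \<sigma> (\<sigma>' x) = x"
        using s' True by blast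
      then show ?thesis unfolding fR_def hR_def using True by auto
    qed (use x in \<open>auto simp: fR_def hR_def\<close>)
  qed
  define g where "g = four_block_mat A C (0\<^sub>m m n) B"
  have g: "g \<in> carrier_mat ?N ?N" unfolding g_def using A B by auto
  have eq: "pmat ?N fL * g * pmat ?N fR =
       four_block_mat (dmat n (row_entry A)) C (0\<^sub>m m n) (dmat m (col_entry B))"
  proof (rule eq_matI)
    fix r c assume rc: "r < dim_row (four_block_mat (dmat n (row_entry A)) C (0\<^sub>m m n) (dmat m (col_entry B)))"
      "c < dim_col (four_block_mat (dmat n (row_entry A)) C (0\<^sub>m m n) (dmat m (col_entry B)))"
    hence rc': "r < ?N" "c < ?N" by auto
    have fLr: "fL r < ?N" "hR c < ?N" using L R rc' by blast+
    have Lf: "\<forall>x<?N. fL x < ?N" using L by blast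
    have "(pmat ?N fL * g * pmat ?N fR) $$ (r, c) = (pmat ?N fL * g) $$ (r, hR c)"
      by (rule pmat_right[OF R mult_carrier_mat[OF pmat_carrier g] rc'])
    also have "\<dots> = g $$ (fL r, hR c)"
      by (rule pmat_left[OF Lf g rc'(1) fLr(2)])
    also have "\<dots> = four_block_mat (dmat n (row_entry A)) C (0\<^sub>m m n) (dmat m (col_entry B)) $$ (r, c)"
    proof -
      show ?thesis
      proof (cases "r < n")
        case r: True
        show ?thesis
        proof (cases "c < n")
          case c: True
          have "A $$ (r, \<sigma> c) = (if r = c then A $$ (r, \<sigma> r) else 0)"
          proof (cases "r = c")
            case False
            show ?thesis
            proof (rule ccontr)
              assume "\<not> ?thesis"
              hence "A $$ (r, \<sigma> c) \<noteq> 0" using False by simp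
              hence "\<sigma> c = \<sigma> r" using s(2)[of r "\<sigma> c"] s(1)[of c] r c by auto
              hence "\<sigma>' (\<sigma> c) = \<sigma>' (\<sigma> r)" by simp
              moreover have "\<sigma>' (\<sigma> c) = c" "\<sigma>' (\<sigma> r) = r" using s' r c by blast+
              ultimately show False using False by simp
            qed
          qed simp
          moreover have "\<sigma> c < n" using s(1) c by blast
          ultimately show ?thesis using r c fLr A B C unfolding g_def fL_def hR_def
            by (simp add: dmat_def re)
        next
          case c: False
          then show ?thesis using r c fLr rc' A B C unfolding g_def fL_def hR_def by simp
        qed
      next
        case r: False
        have r': "r - n < m" using rc' r by auto
        show ?thesis
        proof (cases "c < n")
          case c: True
          moreover have "\<sigma> c < n" using s(1) c by blast
          ultimately show ?thesis using r c fLr rc' A B C unfolding g_def fL_def hR_def by simp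
        next
          case c: False
          have c': "c - n < m" using rc' c by auto
          have "B $$ (\<tau> (r - n), c - n) = (if r = c then B $$ (\<tau> (c - n), c - n) else 0)"
          proof (cases "r = c")
            case False
            show ?thesis
            proof (rule ccontr)
              assume "\<not> ?thesis"
              hence "B $$ (\<tau> (r - n), c - n) \<noteq> 0" using False by simp
              hence "\<tau> (r - n) = \<tau> (c - n)" using u(2)[of "\<tau> (r - n)" "c - n"] u(1)[of "r - n"] r' c' by auto
              hence "\<tau>' (\<tau> (r - n)) = \<tau>' (\<tau> (c - n))" by simp
              moreover have "\<tau>' (\<tau> (r - n)) = r - n" "\<tau>' (\<tau> (c - n)) = c - n" using u' r' c' by blast+
              ultimately have "r - n = c - n" by simp
              thus False using False r c by auto
            qed
          qed simp
          then show ?thesis using r c fLr rc' A B C unfolding g_def fL_def hR_def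
            by (auto simp: dmat_def ce)
        qed
      qed
    qed
    finally show "(pmat ?N fL * g * pmat ?N fR) $$ (r, c) =
       four_block_mat (dmat n (row_entry A)) C (0\<^sub>m m n) (dmat m (col_entry B)) $$ (r, c)" .
  qed auto
  have nzA: "\<forall>i<n. row_entry A i \<noteq> 0" using s(1) re by auto
  have nzB: "\<forall>j<m. col_entry B j \<noteq> 0" using u(1) ce by auto
  show ?thesis
    using pmat_GL[OF val L] pmat_GL[OF val R] eq nzA nzB unfolding g_def by blast
qed

end

definition umat :: "nat \<Rightarrow> nat \<Rightarrow> 'a::field mat \<Rightarrow> 'a mat" where
  "umat n m Z = four_block_mat (1\<^sub>m n) Z (0\<^sub>m m n) (1\<^sub>m m)"

lemma diag_pow_dmat: "diag_pow t gs = dmat (length gs) (\<lambda>i. t powi (gs ! i))"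
  by (simp add: diag_pow_def dmat_def)

lemma assoc6: assumes c: "A \<in> carrier_mat N N" "B \<in> carrier_mat N N" "C \<in> carrier_mat N N"
    "D \<in> carrier_mat N N" "E \<in> carrier_mat N N" "F \<in> carrier_mat N N"
  shows "A * (B * (C * D * E)) * F = (A * B * C) * D * (E * F)"
proof -
  note m = mult_carrier_mat
  have "A * (B * (C * D * E)) * F = A * (B * (C * (D * E))) * F"
    using assoc_mult_mat[OF c(3,4,5)] by simp
  also have "\<dots> = A * (B * (C * (D * E)) * F)"
    by (rule assoc_mult_mat[OF c(1) m[OF c(2) m[OF c(3) m[OF c(4,5)]]] c(6)])
  also have "B * (C * (D * E)) * F = B * (C * (D * E) * F)"
    by (rule assoc_mult_mat[OF c(2) m[OF c(3) m[OF c(4,5)]] c(6)])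
  also have "C * (D * E) * F = C * (D * E * F)"
    by (rule assoc_mult_mat[OF c(3) m[OF c(4,5)] c(6)])
  also have "D * E * F = D * (E * F)"
    by (rule assoc_mult_mat[OF c(4,5,6)])
  finally have l: "A * (B * (C * D * E)) * F = A * (B * (C * (D * (E * F))))" .
  have "(A * B * C) * D * (E * F) = (A * B * C) * (D * (E * F))"
    by (rule assoc_mult_mat[OF m[OF m[OF c(1,2)] c(3)] c(4) m[OF c(5,6)]])
  also have "\<dots> = (A * B) * (C * (D * (E * F)))"
    by (rule assoc_mult_mat[OF m[OF c(1,2)] c(3) m[OF c(4) m[OF c(5,6)]]])
  also have "\<dots> = A * (B * (C * (D * (E * F))))"
    by (rule assoc_mult_mat[OF c(1,2) m[OF c(3) m[OF c(4) m[OF c(5,6)]]]])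
  finally show ?thesis using l by simp
qed

context
  fixes v :: "'a::field \<Rightarrow> int" and t :: 'a
  assumes val: "normalized_dval v t"
begin

lemma umat_GL: assumes Z: "Z \<in> carrier_mat n m" and i: "integral_mat v Z"
  shows "umat n m Z \<in> GL_int v (n + m)"
proof (rule GL_intI[OF val, of _ _ "umat n m (- Z)"])
  show "umat n m Z \<in> carrier_mat (n + m) (n + m)" "umat n m (- Z) \<in> carrier_mat (n + m) (n + m)"
    unfolding umat_def by auto
  have z1: "- 0\<^sub>m m m + 1\<^sub>m m = (1\<^sub>m m :: 'a mat)" "0\<^sub>m m m + 1\<^sub>m m = (1\<^sub>m m :: 'a mat)"
    by (intro eq_matI; auto)+
  have "umat n m Z * umat n m (- Z) = four_block_mat (1\<^sub>m n) (- Z + Z) (0\<^sub>m m n) (1\<^sub>m m)"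
    unfolding umat_def using Z by (subst mult_four_block_mat) (auto simp: z1)
  also have "- Z + Z = 0\<^sub>m n m" using Z by (intro eq_matI) auto
  finally show "umat n m Z * umat n m (- Z) = 1\<^sub>m (n + m)" by simp
  have "umat n m (- Z) * umat n m Z = four_block_mat (1\<^sub>m n) (Z + - Z) (0\<^sub>m m n) (1\<^sub>m m)"
    unfolding umat_def using Z by (subst mult_four_block_mat) (auto simp: z1)
  also have "Z + - Z = 0\<^sub>m n m" using Z by (intro eq_matI) auto
  finally show "umat n m (- Z) * umat n m Z = 1\<^sub>m (n + m)" by simp
  show "integral_mat v (umat n m Z)" using Z i
    unfolding umat_def integral_mat_def by (auto simp: integral_0[OF val] integral_1[OF val])
  show "integral_mat v (umat n m (- Z))" using Z i
    unfolding umat_def integral_mat_def by (auto simp: integral_0[OF val] integral_1[OF val] integral_neg[OF val])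
qed

lemma if_dir:
  fixes a b :: "nat \<Rightarrow> 'a" and C :: "'a mat" and n m :: nat
  assumes C: "C \<in> carrier_mat n m" and an: "\<forall>i<n. a i \<noteq> 0" and bn: "\<forall>j<m. b j \<noteq> 0"
    and cond: "\<forall>i<n. \<forall>j<m. C $$ (i, j) \<noteq> 0 \<longrightarrow> min (v (a i)) (v (b j)) \<le> v (C $$ (i, j))"
  shows "\<exists>k1\<in>GL_int v (n + m). \<exists>k2\<in>GL_int v (n + m).
    four_block_mat (dmat n a) C (0\<^sub>m m n) (dmat m b) =
      k1 * diag_pow t (sort (map (\<lambda>i. v (a i)) [0..<n] @ map (\<lambda>j. v (b j)) [0..<m])) * k2"
proof -
  let ?N = "n + m"
  define \<delta> where "\<delta> = map (\<lambda>i. v (a i)) [0..<n] @ map (\<lambda>j. v (b j)) [0..<m]"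
  define \<gamma> where "\<gamma> = sort \<delta>"
  define P where "P i j \<longleftrightarrow> C $$ (i, j) \<noteq> 0 \<and> v (a i) \<le> v (C $$ (i, j))" for i j
  define Y where "Y = mat n m (\<lambda>(i, j). if P i j then C $$ (i, j) / a i else 0)"
  define X where "X = mat n m (\<lambda>(i, j). if P i j then 0 else C $$ (i, j) / b j)"
  have Yc: "Y \<in> carrier_mat n m" and Xc: "X \<in> carrier_mat n m" unfolding X_def Y_def by auto
  have Yi: "integral_mat v Y" unfolding integral_mat_def Y_def
    using an by (auto simp: P_def integral_def vdiv[OF val])
  have Xi: "integral_mat v X" unfolding integral_mat_def X_def
  proof (intro allI impI)
    fix i j assume ij: "i < dim_row (mat n m (\<lambda>(i, j). if P i j then 0 else C $$ (i, j) / b j))"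
      "j < dim_col (mat n m (\<lambda>(i, j). if P i j then 0 else C $$ (i, j) / b j))"
    hence ij': "i < n" "j < m" by auto
    show "integral v (mat n m (\<lambda>(i, j). if P i j then 0 else C $$ (i, j) / b j) $$ (i, j))"
    proof (cases "P i j \<or> C $$ (i, j) = 0")
      case True thus ?thesis using ij' by (auto simp: integral_def)
    next
      case False
      hence "v (b j) \<le> v (C $$ (i, j))" using cond ij' unfolding P_def by force
      thus ?thesis using False ij' bn by (auto simp: integral_def vdiv[OF val])
    qed
  qed
  define Dg where "Dg = four_block_mat (dmat n a) (0\<^sub>m n m) (0\<^sub>m m n) (dmat m b)"
  have Ceq: "dmat n a * Y + X * dmat m b = C"
  proof (rule eq_matI)
    fix i j assume ij: "i < dim_row C" "j < dim_col C"
    hence ij': "i < n" "j < m" using C by auto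
    have "(dmat n a * Y + X * dmat m b) $$ (i, j) = a i * Y $$ (i, j) + X $$ (i, j) * b j"
    proof -
      have "(dmat n a * Y + X * dmat m b) $$ (i, j) = (dmat n a * Y) $$ (i, j) + (X * dmat m b) $$ (i, j)"
        using ij' Xc by (intro index_add_mat(1)) auto
      also have "(dmat n a * Y) $$ (i, j) = a i * Y $$ (i, j)" by (rule dmat_left[OF Yc ij'])
      also have "(X * dmat m b) $$ (i, j) = X $$ (i, j) * b j" by (rule dmat_right[OF Xc ij'])
      finally show ?thesis .
    qed
    also have "\<dots> = C $$ (i, j)" using ij' an bn unfolding X_def Y_def by auto
    finally show "(dmat n a * Y + X * dmat m b) $$ (i, j) = C $$ (i, j)" .
  qed (use C Xc in auto)
  have eq1: "umat n m X * Dg * umat n m Y = four_block_mat (dmat n a) C (0\<^sub>m m n) (dmat m b)"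
  proof -
    have "umat n m X * Dg = four_block_mat (dmat n a) (X * dmat m b) (0\<^sub>m m n) (dmat m b)"
      unfolding umat_def Dg_def using Xc by (subst mult_four_block_mat) auto
    also have "\<dots> * umat n m Y = four_block_mat (dmat n a) (dmat n a * Y + X * dmat m b) (0\<^sub>m m n) (dmat m b)"
      unfolding umat_def using Xc Yc by (subst mult_four_block_mat) auto
    finally show ?thesis using Ceq by simp
  qed
  define x where "x l = (if l < n then a l else b (l - n))" for l
  have Dgx: "Dg = dmat ?N x"
    unfolding Dg_def x_def by (rule eq_matI) (auto simp: dmat_def)
  have xnz: "x l \<noteq> 0" if "l < ?N" for l using that an bn unfolding x_def by auto
  have len: "length \<delta> = ?N" unfolding \<delta>_def by simp
  have dnth: "\<delta> ! l = v (x l)" if "l < ?N" for l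
    using that unfolding \<delta>_def x_def by (auto simp: nth_append)
  define e where "e l = t powi (\<delta> ! l)" for l
  define u where "u l = x l / e l" for l
  have enz: "e l \<noteq> 0" for l unfolding e_def using t_nz[OF val] by simp
  have uu: "\<forall>l<?N. u l \<noteq> 0 \<and> v (u l) = 0"
  proof (intro allI impI)
    fix l assume l: "l < ?N"
    have "v (e l) = v (x l)" unfolding e_def vpowi[OF val] using dnth[OF l] .
    thus "u l \<noteq> 0 \<and> v (u l) = 0" unfolding u_def using xnz[OF l] enz[of l] vdiv[OF val] by simp
  qed
  have xue: "dmat ?N x = dmat ?N u * dmat ?N e"
  proof (rule eq_matI)
    fix i j assume ij: "i < dim_row (dmat ?N u * dmat ?N e)" "j < dim_col (dmat ?N u * dmat ?N e)"
    hence ij': "i < ?N" "j < ?N" by auto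
    show "dmat ?N x $$ (i, j) = (dmat ?N u * dmat ?N e) $$ (i, j)"
      unfolding dmat_left[OF dmat_carrier ij'] using ij' enz by (auto simp: dmat_def u_def)
  qed auto
  have "mset \<gamma> = mset \<delta>" unfolding \<gamma>_def by simp
  then obtain p where p: "p permutes {..<length \<delta>}" "permute_list p \<delta> = \<gamma>"
    using mset_eq_permutation by metis
  have lg: "length \<gamma> = ?N" using len unfolding \<gamma>_def by simp
  have gnth: "\<gamma> ! i = \<delta> ! p i" if "i < ?N" for i
    using permute_list_nth[OF p(1)] p(2) that len by metis
  have pinv: "\<forall>x<?N. p x < ?N \<and> inv_into UNIV p x < ?N \<and> inv_into UNIV p (p x) = x \<and> p (inv_into UNIV p x) = x"
    using p(1) len permutes_in_image[OF p(1)] permutes_in_image[OF permutes_inv[OF p(1)]]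
      permutes_inverses[OF p(1)] by auto
  have pinv': "\<forall>x<?N. inv_into UNIV p x < ?N \<and> p x < ?N \<and> p (inv_into UNIV p x) = x \<and> inv_into UNIV p (p x) = x"
    using pinv by blast
  have pinvl: "\<forall>x<?N. inv_into UNIV p x < ?N" using pinv by blast
  define Dm where "Dm = diag_pow t \<gamma>"
  have Dmc: "Dm \<in> carrier_mat ?N ?N" unfolding Dm_def diag_pow_def using lg by simp
  have eperm: "dmat ?N e = pmat ?N (inv_into UNIV p) * Dm * pmat ?N p"
  proof (rule eq_matI)
    fix i j assume ij: "i < dim_row (pmat ?N (inv_into UNIV p) * Dm * pmat ?N p)" "j < dim_col (pmat ?N (inv_into UNIV p) * Dm * pmat ?N p)"
    hence ij': "i < ?N" "j < ?N" by auto
    have i1: "inv_into UNIV p i < ?N" "inv_into UNIV p j < ?N" "p (inv_into UNIV p i) = i" "p (inv_into UNIV p j) = j" using pinv ij' by blast+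
    have "(pmat ?N (inv_into UNIV p) * Dm * pmat ?N p) $$ (i, j) = (pmat ?N (inv_into UNIV p) * Dm) $$ (i, inv_into UNIV p j)"
      by (rule pmat_right[OF pinv mult_carrier_mat[OF pmat_carrier Dmc] ij'])
    also have "\<dots> = Dm $$ (inv_into UNIV p i, inv_into UNIV p j)"
      by (rule pmat_left[OF pinvl Dmc ij'(1) i1(2)])
    also have "\<dots> = dmat ?N e $$ (i, j)"
    proof -
      have "inv_into UNIV p i = inv_into UNIV p j \<longleftrightarrow> i = j" using i1 by metis
      thus ?thesis unfolding Dm_def diag_pow_def dmat_def e_def using ij' i1 lg gnth[OF i1(1)] by auto
    qed
    finally show "dmat ?N e $$ (i, j) = (pmat ?N (inv_into UNIV p) * Dm * pmat ?N p) $$ (i, j)" by simp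
  qed auto
  have G1: "umat n m X \<in> GL_int v ?N" "umat n m Y \<in> GL_int v ?N"
    using umat_GL Xc Xi Yc Yi by auto
  have G2: "dmat ?N u \<in> GL_int v ?N" by (rule dmat_GL[OF val uu])
  have G3: "pmat ?N (inv_into UNIV p) \<in> GL_int v ?N" by (rule pmat_GL[OF val pinv'])
  have G4: "pmat ?N p \<in> GL_int v ?N" by (rule pmat_GL[OF val pinv])
  note cs = GL_carrier[OF val G1(1)] GL_carrier[OF val G1(2)] GL_carrier[OF val G2]
     GL_carrier[OF val G3] GL_carrier[OF val G4] Dmc
  have "four_block_mat (dmat n a) C (0\<^sub>m m n) (dmat m b) =
     umat n m X * (dmat ?N u * (pmat ?N (inv_into UNIV p) * Dm * pmat ?N p)) * umat n m Y"
    using eq1 Dgx xue eperm by simp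
  also have "\<dots> = (umat n m X * dmat ?N u * pmat ?N (inv_into UNIV p)) * Dm * (pmat ?N p * umat n m Y)"
    by (rule assoc6) (use cs in auto)
  finally have fin: "four_block_mat (dmat n a) C (0\<^sub>m m n) (dmat m b) =
     (umat n m X * dmat ?N u * pmat ?N (inv_into UNIV p)) * Dm * (pmat ?N p * umat n m Y)" .
  have "umat n m X * dmat ?N u * pmat ?N (inv_into UNIV p) \<in> GL_int v ?N"
    using GL_mult[OF val] G1 G2 G3 by blast
  moreover have "pmat ?N p * umat n m Y \<in> GL_int v ?N"
    using GL_mult[OF val] G1 G4 by blast
  ultimately show ?thesis using fin unfolding Dm_def \<gamma>_def \<delta>_def by blast
qed

end

lemma count_lemma:
  fixes w :: "nat \<Rightarrow> int"
  assumes U: "finite U" and T: "T \<subseteq> U" and cT: "card T = card {l\<in>U. w l \<le> \<mu>} + 1"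
  shows "(\<Sum>l\<in>{l\<in>U. w l \<le> \<mu>}. w l) + \<mu> + 1 \<le> (\<Sum>l\<in>T. w l)"
proof -
  define low where "low = {l\<in>U. w l \<le> \<mu>}"
  have fT: "finite T" using U T finite_subset by blast
  have fl: "finite low" using U unfolding low_def by simp
  have s1: "(\<Sum>l\<in>T. w l) = (\<Sum>l\<in>T \<inter> low. w l) + (\<Sum>l\<in>T - low. w l)"
    using sum.Int_Diff[OF fT] by blast
  have s2: "(\<Sum>l\<in>low. w l) = (\<Sum>l\<in>T \<inter> low. w l) + (\<Sum>l\<in>low - T. w l)"
    using sum.Int_Diff[OF fl, of w T] by (simp add: Int_commute)
  have c1: "card T = card (T \<inter> low) + card (T - low)" using card_Int_Diff[OF fT] .
  have c2: "card low = card (low \<inter> T) + card (low - T)" using card_Int_Diff[OF fl] .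
  have "T \<inter> low = low \<inter> T" by blast
  hence cTH: "card (T - low) = card (low - T) + 1" using c1 c2 cT unfolding low_def by simp
  have b1: "of_nat (card (T - low)) * (\<mu> + 1) \<le> (\<Sum>l\<in>T - low. w l)"
    by (rule sum_bounded_below) (use T in \<open>auto simp: low_def\<close>)
  have b2: "(\<Sum>l\<in>low - T. w l) \<le> of_nat (card (low - T)) * \<mu>"
    by (rule sum_bounded_above) (auto simp: low_def)
  define k where "k = int (card (low - T))"
  have "of_nat (card (T - low)) * (\<mu> + 1) = k * \<mu> + k + \<mu> + 1"
    unfolding cTH k_def by (simp add: algebra_simps)
  moreover have "k \<ge> 0" unfolding k_def by simp
  moreover have "T \<inter> low = low \<inter> T" by blast
  ultimately have "(\<Sum>l\<in>low. w l) + \<mu> + 1 \<le> (\<Sum>l\<in>T. w l)" using s1 s2 b1 b2 unfolding k_def by linarith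
  thus ?thesis unfolding low_def .
qed

lemma sum_list_map_nth: "sum_list (map f xs) = (\<Sum>l<length xs. f (xs ! l))"
  by (simp add: sum_list_sum_nth atLeast0LessThan)

lemma sum_list_map_mset: fixes f :: "'a \<Rightarrow> 'b::comm_monoid_add" shows "mset xs = mset ys \<Longrightarrow> sum_list (map f xs) = sum_list (map f ys)"
proof -
  assume a: "mset xs = mset ys"
  have "sum_list (map f xs) = sum_mset (mset (map f xs))" by (rule sum_mset_sum_list[symmetric])
  also have "\<dots> = sum_mset (mset (map f ys))" unfolding mset_map a ..
  also have "\<dots> = sum_list (map f ys)" by (rule sum_mset_sum_list)
  finally show ?thesis .
qed

lemma sum_list_map_upt: "sum_list (map f [0..<n]) = (\<Sum>i<n. f i)"
  by (simp add: sum_set_upt_conv_sum_list_nat[symmetric] atLeast0LessThan)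

lemma low_sum: fixes xs :: "int list"
  shows "(\<Sum>l\<in>{l\<in>{..<length xs}. xs ! l \<le> \<mu>}. xs ! l) = sum_list (map (\<lambda>x. if x \<le> \<mu> then x else 0) xs)"
  unfolding sum_list_map_nth by (subst sum.inter_filter) auto

lemma low_card: fixes xs :: "int list"
  shows "int (card {l\<in>{..<length xs}. xs ! l \<le> \<mu>}) = sum_list (map (\<lambda>x. if x \<le> \<mu> then 1 else 0) xs)"
proof -
  have "int (card {l\<in>{..<length xs}. xs ! l \<le> \<mu>}) = (\<Sum>l\<in>{l\<in>{..<length xs}. xs ! l \<le> \<mu>}. 1)"
    by simp
  also have "\<dots> = (\<Sum>l<length xs. if xs ! l \<le> \<mu> then 1 else 0)"
    by (subst sum.inter_filter) auto
  finally show ?thesis unfolding sum_list_map_nth by simp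
qed

lemma split_sum: fixes f :: "int \<Rightarrow> int"
  shows "sum_list (map f (map \<alpha> [0..<n] @ map \<beta> [0..<m])) = (\<Sum>i<n. f (\<alpha> i)) + (\<Sum>j<m. f (\<beta> j))"
  unfolding map_append sum_list_append map_map sum_list_map_upt by (simp add: comp_def)

lemma prod_list_map_upt: fixes n :: nat shows "prod_list (map f [0..<n]) = (\<Prod>i<n. f i)"
  by (induction n) (auto simp: lessThan_Suc mult.commute)

lemma sum_lessThan_add_split: fixes n m :: nat shows "(\<Sum>l<n + m. f l) = (\<Sum>l<n. f l) + (\<Sum>l<m. f (n + l))"
  by (induction m) (auto simp: add.assoc)

lemma card_filter_int: fixes n :: nat shows "int (card {l\<in>{..<n}. P l}) = (\<Sum>l<n. if P l then 1 else 0)"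
proof -
  have "int (card {l\<in>{..<n}. P l}) = (\<Sum>l\<in>{l\<in>{..<n}. P l}. 1)" by simp
  also have "\<dots> = (\<Sum>l<n. if P l then 1 else 0)" by (subst sum.inter_filter) auto
  finally show ?thesis .
qed

lemma sum_filter_int: fixes n :: nat shows "(\<Sum>l\<in>{l\<in>{..<n}. P l}. f l) = (\<Sum>l<n. if P l then f l else (0::int))"
  by (subst sum.inter_filter) auto

context
  fixes v :: "'a::field \<Rightarrow> int" and t :: 'a
  assumes val: "normalized_dval v t"
begin

lemma onlyif_dir:
  fixes a b :: "nat \<Rightarrow> 'a" and C :: "'a mat" and n m :: nat
  assumes C: "C \<in> carrier_mat n m" and an: "\<forall>i<n. a i \<noteq> 0" and bn: "\<forall>j<m. b j \<noteq> 0"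
    and k1: "k1 \<in> GL_int v (n + m)" and k2: "k2 \<in> GL_int v (n + m)"
    and eq: "four_block_mat (dmat n a) C (0\<^sub>m m n) (dmat m b) =
      k1 * diag_pow t (sort (map (\<lambda>i. v (a i)) [0..<n] @ map (\<lambda>j. v (b j)) [0..<m])) * k2"
    and i: "i < n" and j: "j < m" and cnz: "C $$ (i, j) \<noteq> 0"
  shows "min (v (a i)) (v (b j)) \<le> v (C $$ (i, j))"
proof (rule ccontr)
  assume neg: "\<not> min (v (a i)) (v (b j)) \<le> v (C $$ (i, j))"
  define \<mu> where "\<mu> = v (C $$ (i, j))"
  define c where "c = C $$ (i, j)"
  define \<alpha> where "\<alpha> l = v (a l)" for l
  define \<beta> where "\<beta> l = v (b l)" for l
  have ai: "\<mu> < \<alpha> i" and bj: "\<mu> < \<beta> j" using neg unfolding \<mu>_def \<alpha>_def \<beta>_def by auto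
  let ?N = "n + m"
  define \<delta> where "\<delta> = map \<alpha> [0..<n] @ map \<beta> [0..<m]"
  define \<gamma> where "\<gamma> = sort \<delta>"
  have lg: "length \<gamma> = ?N" unfolding \<gamma>_def \<delta>_def by simp
  define Dm where "Dm = diag_pow t \<gamma>"
  have Dmd: "Dm = dmat ?N (\<lambda>l. t powi (\<gamma> ! l))" unfolding Dm_def diag_pow_dmat lg ..
  define G where "G = four_block_mat (dmat n a) C (0\<^sub>m m n) (dmat m b)"
  have Gc: "G \<in> carrier_mat ?N ?N" unfolding G_def by auto
  have eqG: "G = k1 * Dm * k2" using eq unfolding G_def Dm_def \<gamma>_def \<delta>_def \<alpha>_def \<beta>_def .
  have Gent: "G $$ (r, l) = (if r < n then (if l < n then (if r = l then a r else 0) else C $$ (r, l - n))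
      else (if l < n then 0 else (if r = l then b (r - n) else 0)))" if "r < ?N" "l < ?N" for r l
    using that C unfolding G_def by (auto simp: dmat_def)
  define RA where "RA = {r\<in>{..<n}. \<alpha> r \<le> \<mu>}"
  define JB where "JB = {r\<in>{..<m}. \<beta> r \<le> \<mu>}"
  define R where "R = insert i (RA \<union> (\<lambda>r. n + r) ` JB)"
  have Rchar: "r \<in> R \<longleftrightarrow> r < ?N \<and> (if r < n then \<alpha> r \<le> \<mu> \<or> r = i else \<beta> (r - n) \<le> \<mu>)" for r
  proof
    assume "r \<in> R" thus "r < ?N \<and> (if r < n then \<alpha> r \<le> \<mu> \<or> r = i else \<beta> (r - n) \<le> \<mu>)"
      unfolding R_def RA_def JB_def using i by auto
  next
    assume a: "r < ?N \<and> (if r < n then \<alpha> r \<le> \<mu> \<or> r = i else \<beta> (r - n) \<le> \<mu>)"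
    show "r \<in> R"
    proof (cases "r < n")
      case True thus ?thesis using a unfolding R_def RA_def by auto
    next
      case False
      hence "r = n + (r - n)" "r - n \<in> JB" using a unfolding JB_def by auto
      thus ?thesis unfolding R_def by blast
    qed
  qed
  have cardR: "card R = card RA + card JB + 1"
  proof -
    have f: "finite RA" "finite JB" unfolding RA_def JB_def by auto
    have "i \<notin> RA \<union> (\<lambda>r. n + r) ` JB" using ai i unfolding RA_def by auto
    hence "card R = card (RA \<union> (\<lambda>r. n + r) ` JB) + 1" unfolding R_def using f by simp
    also have "card (RA \<union> (\<lambda>r. n + r) ` JB) = card RA + card ((\<lambda>r. n + r) ` JB)"
      by (rule card_Un_disjoint) (use f in \<open>auto simp: RA_def\<close>)
    also have "card ((\<lambda>r. n + r) ` JB) = card JB" by (rule card_image) (simp add: inj_on_def)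
    finally show ?thesis .
  qed
  define G1 where "G1 = mat ?N ?N (\<lambda>(r, l). if r < n then (if \<alpha> r \<le> \<mu> then G $$ (r, l) else (if l = r then 1 else 0))
     else if \<beta> (r - n) \<le> \<mu> then G $$ (r, l) else if r = n + j then (if l = n + j then c else 0)
     else (if l = r then 1 else 0))"
  have G1c: "G1 \<in> carrier_mat ?N ?N" unfolding G1_def by simp
  define dg where "dg l = (if l < n then (if \<alpha> l \<le> \<mu> then a l else 1) else if \<beta> (l - n) \<le> \<mu> then b (l - n)
     else if l = n + j then c else 1)" for l
  have G1ut: "upper_triangular G1"
    unfolding upper_triangular_def
  proof (intro allI impI)
    fix r l assume r: "r < dim_row G1" and lr: "l < r"
    hence r': "r < ?N" "l < ?N" using G1c by auto
    show "G1 $$ (r, l) = 0" unfolding G1_def using r' lr Gent[OF r'] by auto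
  qed
  have G1diag: "G1 $$ (l, l) = dg l" if "l < ?N" for l
    unfolding G1_def dg_def using that Gent[OF that that] by auto
  have dgnz: "dg l \<noteq> 0" if "l < ?N" for l
    unfolding dg_def c_def using that an bn cnz by auto
  have detG1: "det G1 = (\<Prod>l<?N. dg l)"
    unfolding det_upper_triangular[OF G1ut G1c] diag_mat_def prod_list_map_upt
    using G1c G1diag by (auto intro: prod.cong)
  have detG1nz: "det G1 \<noteq> 0" and vdetG1: "v (det G1) = (\<Sum>l<?N. v (dg l))"
    using vprod[OF val, of "{..<?N}" dg] dgnz unfolding detG1 by auto
  have vdg: "(\<Sum>l<?N. v (dg l)) = (\<Sum>l<n. if \<alpha> l \<le> \<mu> then \<alpha> l else 0) + (\<Sum>l<m. if \<beta> l \<le> \<mu> then \<beta> l else 0) + \<mu>"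
  proof -
    have "(\<Sum>l<?N. v (dg l)) = (\<Sum>l<n. v (dg l)) + (\<Sum>l<m. v (dg (n + l)))"
      by (rule sum_lessThan_add_split)
    also have "(\<Sum>l<n. v (dg l)) = (\<Sum>l<n. if \<alpha> l \<le> \<mu> then \<alpha> l else 0)"
      by (rule sum.cong) (auto simp: dg_def \<alpha>_def v1[OF val])
    also have "(\<Sum>l<m. v (dg (n + l))) = (\<Sum>l<m. (if \<beta> l \<le> \<mu> then \<beta> l else 0) + (if l = j then \<mu> else 0))"
      by (rule sum.cong) (use bj in \<open>auto simp: dg_def \<beta>_def v1[OF val] \<mu>_def c_def\<close>)
    also have "\<dots> = (\<Sum>l<m. if \<beta> l \<le> \<mu> then \<beta> l else 0) + \<mu>"
      using j by (simp add: sum.distrib)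
    finally show ?thesis by simp
  qed
  define coef where "coef l = (if l = n + j then a i else if \<beta> (l - n) \<le> \<mu> then C $$ (i, l - n) / b (l - n)
     else C $$ (i, l - n))" for l
  define E where "E = mat ?N ?N (\<lambda>(r, l). if r = l then 1 else if r = i \<and> n \<le> l then coef l else 0)"
  have Ec: "E \<in> carrier_mat ?N ?N" unfolding E_def by simp
  have detE: "det E = 1"
  proof -
    have ut: "upper_triangular E" unfolding upper_triangular_def E_def using i by auto
    have "det E = prod_list (diag_mat E)" by (rule det_upper_triangular[OF ut Ec])
    also have "\<dots> = 1" unfolding diag_mat_def E_def by (simp add: prod_list_map_upt)
    finally show ?thesis .
  qed
  define S where "S = swaprows i (n + j) G1"
  have Sc: "S \<in> carrier_mat ?N ?N" unfolding S_def using G1c by (simp add: mat_swaprows_def)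
  have detS: "det S = - det G1" unfolding S_def by (rule det_swaprows[OF _ _ _ G1c]) (use i j in auto)
  have Sent: "S $$ (r, l) = (if r = i then G1 $$ (n + j, l) else if r = n + j then G1 $$ (i, l) else G1 $$ (r, l))"
    if "r < ?N" "l < ?N" for r l
    unfolding S_def mat_swaprows_def using that G1c by auto
  define g2 where "g2 = E * S"
  have g2c: "g2 \<in> carrier_mat ?N ?N" unfolding g2_def using Ec Sc by simp
  have detg2: "det g2 = - det G1" unfolding g2_def det_mult[OF Ec Sc] detE detS by simp
  have g2_noti: "g2 $$ (r, l) = S $$ (r, l)" if r: "r < ?N" "r \<noteq> i" and l: "l < ?N" for r l
  proof -
    have "g2 $$ (r, l) = (\<Sum>k<?N. E $$ (r, k) * S $$ (k, l))"
      unfolding g2_def by (rule mult_entry[OF Ec Sc r(1) l])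
    also have "\<dots> = (\<Sum>k<?N. if k = r then S $$ (k, l) else 0)"
      by (rule sum.cong) (use r in \<open>auto simp: E_def\<close>)
    also have "\<dots> = S $$ (r, l)" using r by (simp add: sum.delta')
    finally show ?thesis .
  qed
  have g2_i: "g2 $$ (i, l) = G $$ (i, l)" if l: "l < ?N" for l
  proof -
    have iN: "i < ?N" using i by simp
    define h where "h k = (if k = i then S $$ (i, l) else 0) + (if k = n + j then (if l = i then a i else 0) else 0)
       + (if n \<le> k \<and> k \<noteq> n + j \<and> k = l then C $$ (i, l - n) else 0)" for k
    have "g2 $$ (i, l) = (\<Sum>k<?N. E $$ (i, k) * S $$ (k, l))"
      unfolding g2_def by (rule mult_entry[OF Ec Sc iN l])
    also have "\<dots> = (\<Sum>k<?N. h k)"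
    proof (rule sum.cong)
      fix k assume k: "k \<in> {..<?N}"
      hence k': "k < ?N" by simp
      show "E $$ (i, k) * S $$ (k, l) = h k"
      proof (cases "k < n")
        case True
        then show ?thesis using k' i unfolding E_def h_def by auto
      next
        case kn: False
        have Ek: "E $$ (i, k) = coef k" using kn k' i unfolding E_def by auto
        have ki: "k \<noteq> i" using kn i by auto
        show ?thesis
        proof (cases "k = n + j")
          case True
          have "S $$ (k, l) = G1 $$ (i, l)" using Sent[OF k' l] True ki by simp
          also have "\<dots> = (if l = i then 1 else 0)" unfolding G1_def using i l ai by simp
          finally show ?thesis unfolding Ek h_def coef_def using True ki by simp
        next
          case knj: False
          have "S $$ (k, l) = G1 $$ (k, l)" using Sent[OF k' l] knj ki by simp
          have kn': "k - n < m" using k' kn by auto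
          show ?thesis
          proof (cases "\<beta> (k - n) \<le> \<mu>")
            case True
            have "G1 $$ (k, l) = G $$ (k, l)" unfolding G1_def using kn True k' l by simp
            also have "\<dots> = (if k = l then b (k - n) else 0)" using Gent[OF k' l] kn by auto
            finally have "S $$ (k, l) = (if k = l then b (k - n) else 0)" using \<open>S $$ (k, l) = G1 $$ (k, l)\<close> by simp
            moreover have "b (k - n) \<noteq> 0" using bn kn' by auto
            ultimately show ?thesis unfolding Ek h_def coef_def using True ki knj kn by auto
          next
            case False
            have "G1 $$ (k, l) = (if l = k then 1 else 0)" unfolding G1_def using kn False knj k' l by simp
            hence "S $$ (k, l) = (if l = k then 1 else 0)" using \<open>S $$ (k, l) = G1 $$ (k, l)\<close> by simp
            thus ?thesis unfolding Ek h_def coef_def using False ki knj kn by auto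
          qed
        qed
      qed
    qed simp
    also have "\<dots> = S $$ (i, l) + (if l = i then a i else 0) + (if n \<le> l \<and> l \<noteq> n + j then C $$ (i, l - n) else 0)"
    proof -
      have "(\<Sum>k<?N. if n \<le> k \<and> k \<noteq> n + j \<and> k = l then C $$ (i, l - n) else 0)
          = (\<Sum>k<?N. if k = l then (if n \<le> l \<and> l \<noteq> n + j then C $$ (i, l - n) else 0) else 0)"
        by (rule sum.cong) auto
      also have "\<dots> = (if n \<le> l \<and> l \<noteq> n + j then C $$ (i, l - n) else 0)" using l by (simp add: sum.delta')
      finally have 3: "(\<Sum>k<?N. if n \<le> k \<and> k \<noteq> n + j \<and> k = l then C $$ (i, l - n) else 0)
          = (if n \<le> l \<and> l \<noteq> n + j then C $$ (i, l - n) else 0)" .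
      show ?thesis unfolding h_def sum.distrib 3 using i j l by (simp add: sum.delta')
    qed
    also have "S $$ (i, l) = (if l = n + j then c else 0)"
    proof -
      have "S $$ (i, l) = G1 $$ (n + j, l)" using Sent[OF iN l] by simp
      also have "\<dots> = (if l = n + j then c else 0)" unfolding G1_def using bj l j by simp
      finally show ?thesis .
    qed
    also have "(if l = n + j then c else 0) + (if l = i then a i else 0) + (if n \<le> l \<and> l \<noteq> n + j then C $$ (i, l - n) else 0)
       = G $$ (i, l)"
      using Gent[OF iN l] i unfolding c_def by auto
    finally show ?thesis .
  qed
  have njR: "n + j \<notin> R" using Rchar[of "n + j"] bj by simp
  have iR: "i \<in> R" unfolding R_def by simp
  have rowR: "g2 $$ (r, l) = G $$ (r, l)" if r: "r \<in> R" and l: "l < ?N" for r l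
  proof (cases "r = i")
    case True thus ?thesis using g2_i l by simp
  next
    case False
    have rN: "r < ?N" using r Rchar by auto
    have "r \<noteq> n + j" using r njR by auto
    hence "g2 $$ (r, l) = G1 $$ (r, l)" using g2_noti[OF rN False l] Sent[OF rN l] False by simp
    also have "\<dots> = G $$ (r, l)" using r False unfolding Rchar G1_def using l by auto
    finally show ?thesis .
  qed
  have rowO: "integral v (g2 $$ (r, l))" if r: "r < ?N" "r \<notin> R" and l: "l < ?N" for r l
  proof -
    have ri: "r \<noteq> i" using r iR by auto
    have "g2 $$ (r, l) = S $$ (r, l)" by (rule g2_noti[OF r(1) ri l])
    also have "\<dots> \<in> {0, 1}"
    proof (cases "r = n + j")
      case True
      hence "S $$ (r, l) = G1 $$ (i, l)" using Sent[OF r(1) l] ri by simp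
      thus ?thesis unfolding G1_def using i l ai by simp
    next
      case False
      hence "S $$ (r, l) = G1 $$ (r, l)" using Sent[OF r(1) l] ri by simp
      moreover have "G1 $$ (r, l) \<in> {0, 1}"
      proof (cases "r < n")
        case True
        hence "\<not> \<alpha> r \<le> \<mu>" using r(2) r(1) ri unfolding Rchar by auto
        thus ?thesis unfolding G1_def using r(1) l True by auto
      next
        case nr: False
        hence "\<not> \<beta> (r - n) \<le> \<mu>" using r(2) r(1) unfolding Rchar by auto
        thus ?thesis unfolding G1_def using r(1) l nr False by auto
      qed
      ultimately show ?thesis by simp
    qed
    finally show ?thesis using integral_0[OF val] integral_1[OF val] by auto
  qed
  obtain k2' where k2': "k2' \<in> GL_int v ?N" "k2 * k2' = 1\<^sub>m ?N" "k2' * k2 = 1\<^sub>m ?N"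
    using GL_inv[OF val k2] .
  have k1c: "k1 \<in> carrier_mat ?N ?N" and k2c: "k2 \<in> carrier_mat ?N ?N" and k2'c: "k2' \<in> carrier_mat ?N ?N"
    using GL_carrier[OF val] k1 k2 k2'(1) by auto
  have Dmc: "Dm \<in> carrier_mat ?N ?N" unfolding Dmd by simp
  have GkD: "G * k2' = k1 * Dm"
  proof -
    have "G * k2' = (k1 * Dm) * (k2 * k2')" unfolding eqG
      by (rule assoc_mult_mat[OF mult_carrier_mat[OF k1c Dmc] k2c k2'c])
    also have "\<dots> = k1 * Dm" unfolding k2'(2) using k1c Dmc by simp
    finally show ?thesis .
  qed
  define M where "M = g2 * k2'"
  have Mc: "M \<in> carrier_mat ?N ?N" unfolding M_def using g2c k2'c by simp
  have MR: "M $$ (r, l) = k1 $$ (r, l) * t powi (\<gamma> ! l)" if r: "r \<in> R" and l: "l < ?N" for r l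
  proof -
    have rN: "r < ?N" using r Rchar by auto
    have "M $$ (r, l) = (\<Sum>k<?N. g2 $$ (r, k) * k2' $$ (k, l))"
      unfolding M_def by (rule mult_entry[OF g2c k2'c rN l])
    also have "\<dots> = (\<Sum>k<?N. G $$ (r, k) * k2' $$ (k, l))"
      by (rule sum.cong) (use rowR[OF r] in auto)
    also have "\<dots> = (G * k2') $$ (r, l)" by (rule mult_entry[OF Gc k2'c rN l, symmetric])
    also have "\<dots> = (k1 * Dm) $$ (r, l)" unfolding GkD ..
    also have "\<dots> = k1 $$ (r, l) * t powi (\<gamma> ! l)" unfolding Dmd by (rule dmat_right[OF k1c rN l])
    finally show ?thesis .
  qed
  have k1i: "integral_mat v k1" and k2'i: "integral_mat v k2'" using GL_integral[OF val] k1 k2'(1) by auto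
  have Mw: "\<gamma> ! l \<le> v (M $$ (r, l))" if r: "r \<in> R" and l: "l < ?N" and nz: "M $$ (r, l) \<noteq> 0" for r l
  proof -
    have rN: "r < ?N" using r Rchar by auto
    have k1nz: "k1 $$ (r, l) \<noteq> 0" using nz MR[OF r l] by auto
    have "0 \<le> v (k1 $$ (r, l))" using k1i k1nz rN l k1c unfolding integral_mat_def integral_def by auto
    moreover have "v (M $$ (r, l)) = v (k1 $$ (r, l)) + \<gamma> ! l"
      unfolding MR[OF r l] using vmult[OF val k1nz, of "t powi (\<gamma> ! l)"] t_nz[OF val] vpowi[OF val] by simp
    ultimately show ?thesis by simp
  qed
  have MO: "integral v (M $$ (r, l))" if r: "r < ?N" "r \<notin> R" and l: "l < ?N" for r l
  proof -
    have "M $$ (r, l) = (\<Sum>k<?N. g2 $$ (r, k) * k2' $$ (k, l))"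
      unfolding M_def by (rule mult_entry[OF g2c k2'c r(1) l])
    also have "integral v \<dots>"
      by (rule integral_sum[OF val]) (use rowO[OF r] k2'i k2'c l in \<open>auto intro!: integral_mult[OF val] simp: integral_mat_def\<close>)
    finally show ?thesis .
  qed
  have dk2: "det k2' \<noteq> 0" "v (det k2') = 0" using GL_det[OF val k2'(1)] by auto
  have detM: "det M = - det G1 * det k2'" unfolding M_def det_mult[OF g2c k2'c] detg2 ..
  have detMnz: "det M \<noteq> 0" using detG1nz dk2 detM by simp
  have vdetM: "v (det M) = v (det G1)"
  proof -
    have "- det G1 \<noteq> 0" using detG1nz by simp
    hence "v (det M) = v (- det G1) + v (det k2')" unfolding detM using vmult[OF val _ dk2(1)] by blast
    thus ?thesis using dk2(2) vneg[OF val] by simp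
  qed
  define low where "low = {l\<in>{..<length \<gamma>}. \<gamma> ! l \<le> \<mu>}"
  have msg: "mset \<gamma> = mset \<delta>" unfolding \<gamma>_def by simp
  define Xl where "Xl = (\<Sum>l<n. if \<alpha> l \<le> \<mu> then \<alpha> l else 0) + (\<Sum>l<m. if \<beta> l \<le> \<mu> then \<beta> l else 0)"
  have sumlow: "(\<Sum>l\<in>low. \<gamma> ! l) = Xl"
    unfolding low_def low_sum sum_list_map_mset[OF msg] \<delta>_def split_sum Xl_def ..
  have "int (card low) = int (card RA) + int (card JB)"
    unfolding low_def low_card sum_list_map_mset[OF msg] \<delta>_def split_sum RA_def JB_def card_filter_int ..
  hence cardlow: "card R = card low + 1" using cardR by simp
  have bound: "Xl + \<mu> + 1 \<le> v (det M)"
  proof (rule det_bound[OF val Mc _ _ _ _ detMnz, of R "\<lambda>l. \<gamma> ! l"])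
    show "R \<subseteq> {..<?N}" using Rchar by auto
    show "\<And>r l. r \<in> R \<Longrightarrow> l < ?N \<Longrightarrow> M $$ (r, l) \<noteq> 0 \<Longrightarrow> \<gamma> ! l \<le> v (M $$ (r, l))"
      using Mw by blast
    show "\<And>r l. r < ?N \<Longrightarrow> r \<notin> R \<Longrightarrow> l < ?N \<Longrightarrow> integral v (M $$ (r, l))"
      using MO by blast
    fix T assume T: "T \<subseteq> {..<?N}" "card T = card R"
    have "(\<Sum>l\<in>{l\<in>{..<?N}. \<gamma> ! l \<le> \<mu>}. \<gamma> ! l) + \<mu> + 1 \<le> (\<Sum>l\<in>T. \<gamma> ! l)"
      by (rule count_lemma) (use T cardlow lg in \<open>auto simp: low_def\<close>)
    thus "Xl + \<mu> + 1 \<le> (\<Sum>l\<in>T. \<gamma> ! l)" using sumlow lg unfolding low_def by simp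
  qed
  have "v (det M) = Xl + \<mu>" unfolding vdetM vdetG1 vdg Xl_def by simp
  thus False using bound by simp
qed

end

theorem corollary2p2:
  fixes v :: "'a::field \<Rightarrow> int" and t :: 'a
    and A C B :: "'a mat" and n m :: nat
  assumes val: "normalized_dval v t"
    and A: "A \<in> carrier_mat n n" "invertible_mat A" "row_monomial A"
    and B: "B \<in> carrier_mat m m" "invertible_mat B" "col_monomial B"
    and C: "C \<in> carrier_mat n m"
  defines "g \<equiv> four_block_mat A C (0\<^sub>m m n) B"
    and "\<alpha> \<equiv> \<lambda>i. v (row_entry A i)"
    and "\<beta> \<equiv> \<lambda>j. v (col_entry B j)"
  defines "\<gamma> \<equiv> sort (map \<alpha> [0..<n] @ map \<beta> [0..<m])"
  shows "(\<exists>k1 \<in> GL_int v (n + m). \<exists>k2 \<in> GL_int v (n + m). g = k1 * diag_pow t \<gamma> * k2)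
     \<longleftrightarrow> (\<forall>i < n. \<forall>j < m. C $$ (i, j) \<noteq> 0 \<longrightarrow> v (C $$ (i, j)) \<ge> min (\<alpha> i) (\<beta> j))"
proof -
  obtain P Q where PQ: "P \<in> GL_int v (n + m)" "Q \<in> GL_int v (n + m)"
    "P * g * Q = four_block_mat (dmat n (row_entry A)) C (0\<^sub>m m n) (dmat m (col_entry B))"
    "\<forall>i<n. row_entry A i \<noteq> 0" "\<forall>j<m. col_entry B j \<noteq> 0"
    using g_tilde[OF val A B C] unfolding g_def by blast
  have Dc: "diag_pow t \<gamma> \<in> carrier_mat (n + m) (n + m)" unfolding diag_pow_def \<gamma>_def by simp
  have gc: "g \<in> carrier_mat (n + m) (n + m)" unfolding g_def using A B by auto
  have "(\<exists>k1 \<in> GL_int v (n + m). \<exists>k2 \<in> GL_int v (n + m). g = k1 * diag_pow t \<gamma> * k2) \<longleftrightarrow>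
    (\<exists>k1 \<in> GL_int v (n + m). \<exists>k2 \<in> GL_int v (n + m).
       four_block_mat (dmat n (row_entry A)) C (0\<^sub>m m n) (dmat m (col_entry B)) = k1 * diag_pow t \<gamma> * k2)"
    using KDK_iff[OF val PQ(1,2) Dc gc] unfolding PQ(3) .
  also have "\<dots> \<longleftrightarrow> (\<forall>i < n. \<forall>j < m. C $$ (i, j) \<noteq> 0 \<longrightarrow> v (C $$ (i, j)) \<ge> min (\<alpha> i) (\<beta> j))"
  proof
    assume "\<exists>k1 \<in> GL_int v (n + m). \<exists>k2 \<in> GL_int v (n + m).
       four_block_mat (dmat n (row_entry A)) C (0\<^sub>m m n) (dmat m (col_entry B)) = k1 * diag_pow t \<gamma> * k2"
    then obtain k1 k2 where k: "k1 \<in> GL_int v (n + m)" "k2 \<in> GL_int v (n + m)"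
      "four_block_mat (dmat n (row_entry A)) C (0\<^sub>m m n) (dmat m (col_entry B)) = k1 * diag_pow t \<gamma> * k2"
      by blast
    show "\<forall>i < n. \<forall>j < m. C $$ (i, j) \<noteq> 0 \<longrightarrow> v (C $$ (i, j)) \<ge> min (\<alpha> i) (\<beta> j)"
      using onlyif_dir[OF val C PQ(4,5) k(1,2) k(3)[unfolded \<gamma>_def \<alpha>_def \<beta>_def]]
      unfolding \<alpha>_def \<beta>_def by blast
  next
    assume "\<forall>i < n. \<forall>j < m. C $$ (i, j) \<noteq> 0 \<longrightarrow> v (C $$ (i, j)) \<ge> min (\<alpha> i) (\<beta> j)"
    thus "\<exists>k1 \<in> GL_int v (n + m). \<exists>k2 \<in> GL_int v (n + m).
       four_block_mat (dmat n (row_entry A)) C (0\<^sub>m m n) (dmat m (col_entry B)) = k1 * diag_pow t \<gamma> * k2"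
      using if_dir[OF val C PQ(4,5)] unfolding \<gamma>_def \<alpha>_def \<beta>_def by blast
  qed
  finally show ?thesis .
qed

end
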